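(* Let $t\in[0,1]$, $x\in(0,1]$, and $y$ with $1-e^{-t}\le y<1$. Then \[ (1-yx)\,\frac{\log\big(1-x+x\,\frac{e^{-2xt}}{1-yx}\big)}{x\big(1-\frac{e^{-2xt}}{1-yx}\big)}\ \le\ (1-y)\,\frac{\log\big(\frac{e^{-2t}}{1-y}\big)}{1-\frac{e^{-2t}}{1-y}}, \] with equality at $x=1$. Expressions of the form $\log(1-x+xQ)/(1-Q)$ are understood at $Q=1$ as their limit $-x$. *)

theory Defs
  imports "HOL-Analysis.Analysis"
begin

definition logratio :: "real \<Rightarrow> real \<Rightarrow> real" where
  "logratio x Q = (if Q = 1 then - x else ln (1 - x + x * Q) / (1 - Q))"

end

theory Submission
  imports Defs "HOL-Real_Asymp.Real_Asymp"
begin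

definition lam :: "real \<Rightarrow> real" where
  "lam q = (if q = 1 then 1 else ln q / (q - 1))"
definition lamd :: "real \<Rightarrow> real" where
  "lamd q = (if q = 1 then -1/2 else ((q-1)/q - ln q)/(q-1)^2)"

lemma lam_pos: fixes q :: real assumes "q > 0" shows "lam q > 0"
proof (cases "q = 1")
  case True then show ?thesis by (simp add: lam_def)
next
  case False
  show ?thesis
  proof (cases "q < 1")
    case True
    then have "ln q < 0" using assms by simp
    then show ?thesis using True False by (simp add: lam_def divide_neg_neg)
  next
    case False2: False
    then have "q > 1" using False by simp
    then have "ln q > 0" by simp
    then show ?thesis using \<open>q > 1\<close> by (simp add: lam_def)
  qed
qed

lemma lamd_nonpos: fixes q :: real assumes "q > 0" shows "lamd q \<le> 0"
proof (cases "q = 1")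
  case True then show ?thesis by (simp add: lamd_def)
next
  case False
  have "ln (1/q) \<le> 1/q - 1" using assms by (intro ln_le_minus_one) simp
  then have "- ln q \<le> 1/q - 1" using assms by (simp add: ln_div)
  moreover have "(q-1)/q = 1 - 1/q" using assms by (simp add: field_simps)
  ultimately have "(q-1)/q - ln q \<le> 0" by simp
  then show ?thesis using False by (simp add: lamd_def divide_nonpos_nonneg)
qed

lemma lam_deriv: fixes q :: real assumes "q > 0" shows "(lam has_real_derivative lamd q) (at q)"
proof (cases "q = 1")
  case False
  have d: "((\<lambda>q. ln q / (q - 1)) has_real_derivative ((q-1)/q - ln q)/(q-1)^2) (at q)"
    using assms False
    by (auto intro!: derivative_eq_intros simp: field_simps power2_eq_square)
  have ev: "eventually (\<lambda>z. lam z = ln z / (z - 1)) (nhds q)"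
  proof -
    have "open {z::real. z \<noteq> 1}" by (simp add: open_Collect_neq)
    then have "eventually (\<lambda>z. z \<in> {z::real. z \<noteq> 1}) (nhds q)"
      using False by (intro eventually_nhds_in_open) auto
    then show ?thesis by eventually_elim (simp add: lam_def)
  qed
  show ?thesis
    using d False by (subst DERIV_cong_ev[OF refl ev refl]) (simp add: lamd_def)
next
  case True
  have L: "((\<lambda>y. (ln y - (y - 1)) / (y - 1)^2) \<longlongrightarrow> -1/2) (at (1::real))"
    by (rule filterlim_split_at; real_asymp)
  have ev: "eventually (\<lambda>y. (ln y - (y - 1)) / (y - 1)^2 = (lam y - lam 1) / (y - 1)) (at (1::real))"
  proof -
    have "eventually (\<lambda>y. y \<noteq> (1::real)) (at 1)" by (simp add: eventually_at_filter)
    then show ?thesis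
      by eventually_elim (simp add: lam_def field_simps power2_eq_square)
  qed
  have "((\<lambda>y. (lam y - lam 1) / (y - 1)) \<longlongrightarrow> -1/2) (at (1::real))"
    using Lim_transform_eventually[OF L ev] .
  then show ?thesis using True by (simp add: has_field_derivative_iff lamd_def)
qed

lemma ln_pade: fixes q :: real assumes "0 < q" "q \<le> 1" shows "ln q \<le> 2*(q-1)/(q+1)"
proof -
  define h where "h z = ln z - 2*(z-1)/(z+1)" for z :: real
  have "h q \<le> h 1"
  proof (rule deriv_nonneg_imp_mono[where g = h and a = q and b = 1 and g' = "\<lambda>z. 1/z - 4/(z+1)^2"])
    fix z assume z: "z \<in> {q..1}"
    then have zp: "z > 0" using assms by auto
    show "(h has_real_derivative 1/z - 4/(z+1)^2) (at z)"
      unfolding h_def using zp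
      by (auto intro!: derivative_eq_intros simp: field_simps power2_eq_square)
    have a: "4*z \<le> (z+1)^2" using zero_le_power2[of "z-1"] by (simp add: power2_eq_square algebra_simps)
    have "4/(z+1)^2 \<le> 4/(4*z)" by (rule divide_left_mono[OF a]) (use zp in auto)
    then show "1/z - 4/(z+1)^2 \<ge> 0" by simp
  qed (use assms in auto)
  then show ?thesis by (simp add: h_def)
qed

lemma B_nonpos:
  fixes \<xi> t y :: real
  assumes "0 \<le> \<xi>" "\<xi> \<le> 1" "t/2 \<le> y" "y \<le> t"
  shows "2*y - 4*t + 4*\<xi>*t^2*(1-\<xi>*y) \<le> 0"
proof (cases "y = 0")
  case True
  then have "t = 0" using assms by simp
  then show ?thesis using True by simp
next
  case False
  then have yp: "y > 0" using assms by simp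
  have h1: "4*(\<xi>*y)*(1-\<xi>*y) \<le> 1"
    using zero_le_power2[of "2*\<xi>*y - 1"] by (simp add: power2_eq_square algebra_simps)
  have h2: "t^2 * (4*(\<xi>*y)*(1-\<xi>*y)) \<le> t^2" using h1 by (simp add: mult_left_le)
  have h3a: "(2*y - t)*(y-t) \<le> 0" using assms by (intro mult_nonneg_nonpos) auto
  have h3b: "t*y \<ge> 0" using assms yp by simp
  have h3: "2*y^2 - 4*t*y + t^2 \<le> 0"
  proof -
    have "2*y^2 - 4*t*y + t^2 = (2*y - t)*(y-t) - t*y" by (simp add: power2_eq_square algebra_simps)
    then show ?thesis using h3a h3b by linarith
  qed
  have "y * (2*y - 4*t + 4*\<xi>*t^2*(1-\<xi>*y)) = 2*y^2 - 4*t*y + t^2 * (4*(\<xi>*y)*(1-\<xi>*y))"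
    by (simp add: power2_eq_square algebra_simps)
  also have "\<dots> \<le> 0" using h2 h3 by simp
  finally show ?thesis using yp by (simp add: mult_le_0_iff)
qed

lemma G1_nonneg:
  fixes x t y :: real
  assumes x: "0 \<le> x" "x \<le> 1" and t: "0 \<le> t" "t \<le> 1" and y: "1 - exp(-t) \<le> y" "y < 1"
  shows "2*y*(1-x)*(1-x*y) - (1-x*y)^2 + exp(-2*x*t)*(1 - 2*x*t*(1-x*y) + 2*x*y) \<ge> 0"
proof -
  define y0 where "y0 = 1 - exp(-t)"
  define a where "a = exp(-t)"
  have ap: "a > 0" by (simp add: a_def)
  have ea: "a * exp t = 1" by (simp add: a_def exp_minus)
  have y0a: "y0 = 1 - a" by (simp add: y0_def a_def)
  have y0t: "y0 \<le> t" using exp_ge_add_one_self[of "-t"] by (simp add: y0_def)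
  have "1 + t \<le> exp t" by simp
  then have "a * (1+t) \<le> 1" using ea ap by (metis mult_left_mono less_le)
  then have "a \<le> 1 - t/2"
  proof -
    assume h: "a * (1+t) \<le> 1"
    have "(1 - t/2) * (1 + t) \<ge> 1" using t by (simp add: algebra_simps power2_eq_square) (smt (verit) mult_left_le)
    then have "a \<le> a * ((1 - t/2) * (1 + t))" using ap by (simp add: mult_le_cancel_left1)
    also have "\<dots> = (1 - t/2) * (a * (1+t))" by simp
    also have "\<dots> \<le> (1 - t/2) * 1" using h t by (intro mult_left_mono) auto
    finally show ?thesis by simp
  qed
  then have y0t2: "t/2 \<le> y0" using y0a by simp
  have y0nn: "0 \<le> y0" using t y0t2 by simp
  have y0lt: "y0 < 1" using ap y0a by simp
  define g where "g \<xi> = 2*y0*(1-\<xi>)*(1-\<xi>*y0) - (1-\<xi>*y0)^2 + exp(-2*\<xi>*t)*(1 - 2*\<xi>*t*(1-\<xi>*y0) + 2*\<xi>*y0)" for \<xi>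
  have g1: "g 1 \<ge> 0"
  proof -
    have e2: "exp(-2*1*t) = a^2" by (simp add: a_def power2_eq_square exp_add[symmetric])
    have "g 1 = 2*a^2*(1 - a*(1+t))"
      unfolding g_def e2 y0a by (simp add: power2_eq_square algebra_simps)
    also have "\<dots> \<ge> 0" using \<open>a * (1+t) \<le> 1\<close> by simp
    finally show ?thesis .
  qed
  have gx: "g 1 \<le> g x"
  proof (rule deriv_nonpos_imp_antimono[where g = g and a = x and b = 1 and
        g' = "\<lambda>\<xi>. -2*y0^2*(1-\<xi>) + exp(-2*\<xi>*t)*(2*y0 - 4*t + 4*\<xi>*t^2*(1-\<xi>*y0))"])
    fix \<xi> assume "\<xi> \<in> {x..1}"
    then have xi: "0 \<le> \<xi>" "\<xi> \<le> 1" using x by auto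
    show "(g has_real_derivative -2*y0^2*(1-\<xi>) + exp(-2*\<xi>*t)*(2*y0 - 4*t + 4*\<xi>*t^2*(1-\<xi>*y0))) (at \<xi>)"
      unfolding g_def
      by (auto intro!: derivative_eq_intros simp: power2_eq_square algebra_simps)
    have "2*y0 - 4*t + 4*\<xi>*t^2*(1-\<xi>*y0) \<le> 0" using B_nonpos[OF xi y0t2 y0t] .
    then have "exp(-2*\<xi>*t)*(2*y0 - 4*t + 4*\<xi>*t^2*(1-\<xi>*y0)) \<le> 0" by (simp add: mult_nonneg_nonpos)
    moreover have "-2*y0^2*(1-\<xi>) \<le> 0" using xi by simp
    ultimately show "-2*y0^2*(1-\<xi>) + exp(-2*\<xi>*t)*(2*y0 - 4*t + 4*\<xi>*t^2*(1-\<xi>*y0)) \<le> 0" by linarith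
  qed (use x in auto)
  define F where "F = exp(-2*x*t)"
  have Fp: "F > 0" by (simp add: F_def)
  have diff: "(2*y*(1-x)*(1-x*y) - (1-x*y)^2 + F*(1 - 2*x*t*(1-x*y) + 2*x*y)) - g x
      = (y - y0) * (2 + 2*x*F*(x*t+1) - x*(2-x)*(y+y0))"
    unfolding g_def F_def[symmetric] by (simp add: power2_eq_square algebra_simps)
  have yy0: "y0 \<le> y" using y by (simp add: y0_def)
  have xx: "x*(2-x) \<le> 1" using zero_le_power2[of "x-1"] by (simp add: power2_eq_square algebra_simps)
  have "x*(2-x)*(y+y0) \<le> 1*(y+y0)" using xx y0nn yy0 by (intro mult_right_mono) auto
  moreover have "x*F*(x*t+1) \<ge> 0" using x t Fp by simp
  ultimately have "2 + 2*x*F*(x*t+1) - x*(2-x)*(y+y0) \<ge> 0" using y yy0 y0lt by simp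
  then have "(y - y0) * (2 + 2*x*F*(x*t+1) - x*(2-x)*(y+y0)) \<ge> 0" using yy0 by simp
  then show ?thesis using diff gx g1 by (simp add: F_def)
qed

lemma core_alg:
  fixes q l W D y :: real
  assumes q: "0 < q" "q < 1" and W: "W > 0" and D: "D > 0" and y: "y \<ge> 0"
    and l: "l \<le> 2*(q-1)/(q+1)" and G: "W*D \<le> 2*y*q"
  shows "-y*(l/(q-1)) + W*((((q-1)/q - l)/(q-1)^2) * (-D)) \<le> 0"
proof -
  define K where "K = W*D - y*(q-1)"
  have Kp: "K \<ge> 0"
  proof -
    have "y*(q-1) \<le> 0" using y q by (intro mult_nonneg_nonpos) auto
    moreover have "W*D > 0" using W D by simp
    ultimately show ?thesis unfolding K_def by linarith
  qed
  have qne: "q - 1 \<noteq> 0" using q by simp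
  have e1: "-y*(l/(q-1)) + W*((((q-1)/q - l)/(q-1)^2) * (-D)) = (l*K - W*D*(q-1)/q)/(q-1)^2"
  proof -
    have "-y*(l/(q-1)) = -y*l*(q-1)/(q-1)^2" using qne by (simp add: power2_eq_square)
    moreover have "W*((((q-1)/q - l)/(q-1)^2) * (-D)) = (-W*D*(q-1)/q + W*D*l)/(q-1)^2"
      by (simp add: algebra_simps diff_divide_distrib add_divide_distrib)
    ultimately show ?thesis unfolding K_def by (simp add: add_divide_distrib diff_divide_distrib algebra_simps)
  qed
  have e2: "W*D*(q-1)/q - 2*(q-1)/(q+1)*K = (q-1)^2*(2*q*y - W*D)/(q*(q+1))"
    using qne q by (simp add: K_def field_simps power2_eq_square)
  have qq: "q*(q+1) > 0" using q by simp
  have "(q-1)^2*(2*q*y - W*D) \<ge> 0" by (rule mult_nonneg_nonneg) (use G in \<open>auto simp: mult.commute mult.left_commute\<close>)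
  then have "(q-1)^2*(2*q*y - W*D)/(q*(q+1)) \<ge> 0" using qq by (rule divide_nonneg_pos)
  then have h1: "2*(q-1)/(q+1)*K \<le> W*D*(q-1)/q" using e2 by simp
  have h2: "l*K \<le> 2*(q-1)/(q+1)*K" using l Kp by (rule mult_right_mono)
  have "l*K - W*D*(q-1)/q \<le> 0" using h1 h2 by simp
  then have "(l*K - W*D*(q-1)/q)/(q-1)^2 \<le> 0" by (simp add: divide_nonpos_nonneg)
  then show ?thesis using e1 by simp
qed

lemma Pderiv_nonpos:
  fixes \<xi> t y :: real
  assumes xi: "0 < \<xi>" "\<xi> \<le> 1" and t: "0 \<le> t" "t \<le> 1" and y: "1 - exp(-t) \<le> y" "y < 1"
  shows "-y * lam (1 - \<xi> + \<xi> * (exp (- 2 * \<xi> * t) / (1 - y * \<xi>)))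
     + (1 - y*\<xi>) * (lamd (1 - \<xi> + \<xi> * (exp (- 2 * \<xi> * t) / (1 - y * \<xi>)))
        * (-1 + exp (- 2 * \<xi> * t) * (1 - 2*\<xi>*t*(1 - y*\<xi>)) / (1 - y*\<xi>)^2)) \<le> 0"
proof -
  define W where "W = 1 - y*\<xi>"
  define F where "F = exp (- 2 * \<xi> * t)"
  define q where "q = 1 - \<xi> + \<xi> * (F / W)"
  define qd where "qd = -1 + F * (1 - 2*\<xi>*t*W) / W^2"
  have y0: "y \<ge> 0" using y t by (smt (verit) exp_le_one_iff)
  have "y*\<xi> \<le> y" using y0 xi by (simp add: mult_left_le)
  then have Wp: "W > 0" using y by (simp add: W_def)
  have Fp: "F > 0" by (simp add: F_def)
  have qp: "q > 0" unfolding q_def using xi Wp Fp by (smt (verit) divide_pos_pos mult_pos_pos)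
  have goal: "-y * lam q + W * (lamd q * qd) \<le> 0"
  proof (cases "qd \<ge> 0")
    case True
    have "lamd q * qd \<le> 0" using lamd_nonpos[OF qp] True by (simp add: mult_nonpos_nonneg)
    then have "W * (lamd q * qd) \<le> 0" using Wp by (simp add: mult_nonneg_nonpos)
    moreover have "y * lam q \<ge> 0" using y0 lam_pos[OF qp] by simp
    ultimately show ?thesis by simp
  next
    case False
    have q1: "q < 1"
    proof (rule ccontr)
      assume "\<not> q < 1"
      then have "\<xi> * (F / W) \<ge> \<xi> * 1" unfolding q_def by simp
      then have "F / W \<ge> 1" using xi by (metis mult_le_cancel_left_pos)
      then have FW: "F \<ge> W" using Wp by (simp add: divide_simps split: if_splits)
      have "F * exp (2*\<xi>*t) = 1" by (simp add: F_def exp_add[symmetric])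
      moreover have "1 + 2*\<xi>*t \<le> exp (2*\<xi>*t)" by (rule exp_ge_add_one_self)
      ultimately have "F * (1 + 2*\<xi>*t) \<le> 1" using Fp by (metis mult_left_mono less_le)
      moreover have "W * (1 + 2*\<xi>*t) \<le> F * (1 + 2*\<xi>*t)" using FW xi t by (intro mult_right_mono) auto
      ultimately have "W \<le> 1 - 2*\<xi>*t*W" by (simp add: algebra_simps)
      then have "W * W \<le> F * (1 - 2*\<xi>*t*W)" using FW Wp by (intro mult_mono) auto
      then have "F * (1 - 2*\<xi>*t*W) / W^2 \<ge> 1" using Wp by (simp add: power2_eq_square divide_simps)
      then have "qd \<ge> 0" by (simp add: qd_def)
      then show False using False by simp
    qed
    have qne: "q \<noteq> 1" using q1 by simp
    have G1: "2*y*(1-\<xi>)*(1-\<xi>*y) - (1-\<xi>*y)^2 + exp(-2*\<xi>*t)*(1 - 2*\<xi>*t*(1-\<xi>*y) + 2*\<xi>*y) \<ge> 0"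
      using G1_nonneg[of \<xi> t y] xi t y by simp
    have G1': "2*y*q*W - W^2*(-qd) \<ge> 0"
    proof -
      have "2*y*q*W - W^2*(-qd) = 2*y*(1-\<xi>)*W - W^2 + F*(1 - 2*\<xi>*t*W + 2*\<xi>*y)"
        unfolding q_def qd_def using Wp by (simp add: field_simps power2_eq_square)
      also have "\<dots> = 2*y*(1-\<xi>)*(1-\<xi>*y) - (1-\<xi>*y)^2 + exp(-2*\<xi>*t)*(1 - 2*\<xi>*t*(1-\<xi>*y) + 2*\<xi>*y)"
        unfolding W_def F_def by (simp add: algebra_simps)
      finally have "2*y*q*W - W^2*(-qd) = 2*y*(1-\<xi>)*(1-\<xi>*y) - (1-\<xi>*y)^2 + exp(-2*\<xi>*t)*(1 - 2*\<xi>*t*(1-\<xi>*y) + 2*\<xi>*y)" .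
      then show ?thesis using G1 by simp
    qed
    have WD: "W*(-qd) \<le> 2*y*q"
    proof -
      have h: "W*(W*(-qd)) \<le> W*(2*y*q)" using G1' by (simp add: power2_eq_square algebra_simps)
      show ?thesis using h by (simp only: mult_le_cancel_left_pos[OF Wp])
    qed
    have "-y*(ln q/(q-1)) + W*((((q-1)/q - ln q)/(q-1)^2) * (-(-qd))) \<le> 0"
      by (rule core_alg[OF qp q1 Wp _ y0 ln_pade[OF qp less_imp_le[OF q1]] WD]) (use False in simp)
    then show ?thesis using qne by (simp add: lam_def lamd_def)
  qed
  then show ?thesis by (simp add: W_def F_def q_def qd_def)
qed

lemma logratio_lam:
  fixes x Q :: real
  assumes "0 < x" "x \<le> 1" "0 < Q"
  shows "logratio x Q = - x * lam (1 - x + x * Q)"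
proof (cases "Q = 1")
  case True then show ?thesis by (simp add: logratio_def lam_def)
next
  case False
  have ne: "1 - x + x * Q \<noteq> 1" using False assms by simp
  have ne2: "1 - Q \<noteq> 0" using False by simp
  have "ln (1 - x + x * Q) / (1 - Q) = - x * (ln (1 - x + x * Q) / (1 - x + x * Q - 1))"
    using ne2 assms by (simp add: field_simps)
  then show ?thesis using False ne by (simp add: logratio_def lam_def)
qed

theorem mainTheorem14:
  fixes t x y :: real
  assumes "0 \<le> t" "t \<le> 1" "0 < x" "x \<le> 1" "1 - exp (- t) \<le> y" "y < 1"
  shows "(1 - y * x) * logratio x (exp (- 2 * x * t) / (1 - y * x)) / x
           \<le> (1 - y) * logratio 1 (exp (- 2 * t) / (1 - y))
         \<and> (1 - y * 1) * logratio 1 (exp (- 2 * 1 * t) / (1 - y * 1)) / 1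
           = (1 - y) * logratio 1 (exp (- 2 * t) / (1 - y))"
proof
  show "(1 - y * 1) * logratio 1 (exp (- 2 * 1 * t) / (1 - y * 1)) / 1
           = (1 - y) * logratio 1 (exp (- 2 * t) / (1 - y))" by simp
next
  have y0: "y \<ge> 0" using assms by (smt (verit) exp_le_one_iff)
  define qf where "qf \<xi> = 1 - \<xi> + \<xi> * (exp (- 2 * \<xi> * t) / (1 - y * \<xi>))" for \<xi>
  define qdf where "qdf \<xi> = -1 + exp (- 2 * \<xi> * t) * (1 - 2*\<xi>*t*(1 - y*\<xi>)) / (1 - y*\<xi>)^2" for \<xi>
  define P where "P \<xi> = (1 - y*\<xi>) * lam (qf \<xi>)" for \<xi>
  have Wpos: "1 - y*\<xi> > 0" if "\<xi> \<le> 1" "0 \<le> \<xi>" for \<xi>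
  proof -
    have "y*\<xi> \<le> y" using y0 that by (simp add: mult_left_le)
    then show ?thesis using assms by simp
  qed
  have qpos: "qf \<xi> > 0" if "\<xi> \<le> 1" "0 \<le> \<xi>" for \<xi>
  proof -
    define G where "G = exp (- 2 * \<xi> * t) / (1 - y * \<xi>)"
    have Gp: "G > 0" using Wpos[OF that] by (simp add: G_def)
    have "\<xi> * G \<ge> 0" by (rule mult_nonneg_nonneg) (use that Gp in auto)
    moreover have "\<xi> = 1 \<Longrightarrow> \<xi> * G > 0" using Gp by simp
    ultimately have "1 - \<xi> + \<xi> * G > 0" using that by (cases "\<xi> = 1") auto
    then show ?thesis unfolding qf_def G_def .
  qed
  have "P 1 \<le> P x"
  proof (rule deriv_nonpos_imp_antimono[where g = P and a = x and b = 1 and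
        g' = "\<lambda>\<xi>. -y * lam (qf \<xi>) + (1 - y*\<xi>) * (lamd (qf \<xi>) * qdf \<xi>)"])
    fix \<xi> assume "\<xi> \<in> {x..1}"
    then have xi: "0 < \<xi>" "\<xi> \<le> 1" using assms by auto
    have W: "1 - y*\<xi> \<noteq> 0" using Wpos[of \<xi>] xi by simp
    have dq: "(qf has_real_derivative qdf \<xi>) (at \<xi>)"
      unfolding qf_def qdf_def using W
      by (auto intro!: derivative_eq_intros simp: field_simps power2_eq_square)
    have dl: "((\<lambda>\<xi>. lam (qf \<xi>)) has_real_derivative lamd (qf \<xi>) * qdf \<xi>) (at \<xi>)"
      by (rule DERIV_chain2[OF lam_deriv[OF qpos] dq]) (use xi in auto)
    have dW: "((\<lambda>\<xi>. 1 - y*\<xi>) has_real_derivative -y) (at \<xi>)"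
      by (auto intro!: derivative_eq_intros)
    show "(P has_real_derivative -y * lam (qf \<xi>) + (1 - y*\<xi>) * (lamd (qf \<xi>) * qdf \<xi>)) (at \<xi>)"
      unfolding P_def using DERIV_mult[OF dW dl] by (simp add: algebra_simps)
    show "-y * lam (qf \<xi>) + (1 - y*\<xi>) * (lamd (qf \<xi>) * qdf \<xi>) \<le> 0"
      unfolding qf_def qdf_def using Pderiv_nonpos[OF xi assms(1,2,5,6)] .
  qed (use assms in auto)
  moreover have "(1 - y * x) * logratio x (exp (- 2 * x * t) / (1 - y * x)) / x = - P x"
  proof -
    have "logratio x (exp (- 2 * x * t) / (1 - y * x)) = - x * lam (qf x)"
      unfolding qf_def using assms Wpos[of x] by (intro logratio_lam) auto
    then show ?thesis using assms by (simp add: P_def)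
  qed
  moreover have "(1 - y) * logratio 1 (exp (- 2 * t) / (1 - y)) = - P 1"
  proof -
    have "logratio 1 (exp (- 2 * t) / (1 - y)) = - 1 * lam (1 - 1 + 1 * (exp (- 2 * t) / (1 - y)))"
      using assms by (intro logratio_lam) auto
    then show ?thesis by (simp add: P_def qf_def)
  qed
  ultimately show "(1 - y * x) * logratio x (exp (- 2 * x * t) / (1 - y * x)) / x
           \<le> (1 - y) * logratio 1 (exp (- 2 * t) / (1 - y))" by simp
qed

end
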